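(* Fix an integer blocklength $m\ge 1$, a message size $N_c>0$ (bits), an information leakage level $\delta\in(0,1/2)$, and set $\mu=Q^{-1}(\delta)$, where $Q(y)=\frac{1}{\sqrt{2\pi}}\int_y^\infty e^{-t^2/2}\,dt$. Let $V(y)=(\log_2 e)^2\left(1-(1+y)^{-2}\right)$ for $y\ge 0$. Fix constants $a_C\in(0,1)$, $\varrho_E^2\ge 0$, $P>0$, $\sigma^2>0$, and $G_E>0$ (the path-loss factor $G_E=(d_{SR_2}d_{R_2E})^{-\alpha}$). For $x\ge 0$ (representing the squared optimal eavesdropper channel amplitude $|\gamma_O^{(E)}|^2$) define $$\gamma_{E,C}(x)=\frac{a_C P G_E\, x}{\varrho_E^2 P G_E\, x+\sigma^2},\qquad \tilde\beta(x)=(1+\gamma_{E,C}(x))\exp\!\left(\left(\frac{\mu V^{1/2}(\gamma_{E,C}(x))}{\sqrt m}+\frac{N_c}{m}\right)\ln 2\right)-1.$$ Then $\tilde\beta$ is a monotonically increasing function of $x=|\gamma_O^{(E)}|^2$ on $[0,\infty)$.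
   Context: $\tilde\beta$ is the security threshold of the finite-blocklength secure block error rate approximation; $\gamma_{E,C}$ is the SNR at an eavesdropper (with hardware impairment level $\varrho_E^2$) for decoding the central user's message after ideal removal of its own signal. *)

theory Defs
  imports "HOL-Analysis.Analysis"
begin

definition Qfun :: "real \<Rightarrow> real" where
  "Qfun y = (1 / sqrt (2 * pi)) * (LINT t:{y..}|lborel. exp (- (t\<^sup>2) / 2))"

text \<open>Inverse of Q (Q is strictly decreasing onto (0,1)).\<close>
definition Qinv :: "real \<Rightarrow> real" where
  "Qinv d = (THE y. Qfun y = d)"

definition Vdisp :: "real \<Rightarrow> real" where
  "Vdisp y = (log 2 (exp 1))\<^sup>2 * (1 - 1 / (1 + y)\<^sup>2)"

definition gammaEC :: "real \<Rightarrow> real \<Rightarrow> real \<Rightarrow> real \<Rightarrow> real \<Rightarrow> real \<Rightarrow> real" where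
  "gammaEC aC rhoE2 P sigma2 GE x = (aC * P * GE * x) / (rhoE2 * P * GE * x + sigma2)"

definition beta_tilde :: "nat \<Rightarrow> real \<Rightarrow> real \<Rightarrow> real \<Rightarrow> real \<Rightarrow> real \<Rightarrow> real \<Rightarrow> real \<Rightarrow> real \<Rightarrow> real" where
  "beta_tilde m Nc delta aC rhoE2 P sigma2 GE x =
     (let g = gammaEC aC rhoE2 P sigma2 GE x; mu = Qinv delta in
      (1 + g) * exp ((mu * sqrt (Vdisp g) / sqrt (real m) + Nc / real m) * ln 2) - 1)"

end

theory Submission
  imports Defs "HOL-Probability.Probability"
begin

abbreviation "nd \<equiv> std_normal_density"

lemma intg_ind: "integrable lborel (\<lambda>t. indicator A t * nd t)" if "A \<in> sets borel"
  using that integrable_mult_indicator[of A lborel nd] by auto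

lemma split_S:
  assumes "y \<le> z"
  shows "(LINT t:{y..}|lborel. nd t) = (LINT t:{y..<z}|lborel. nd t) + (LINT t:{z..}|lborel. nd t)"
proof -
  have "(\<lambda>t. indicator {y..} t *\<^sub>R nd t) = (\<lambda>t. indicator {y..<z} t *\<^sub>R nd t + indicator {z..} t *\<^sub>R nd t)"
    using assms by (auto simp: fun_eq_iff split: split_indicator)
  then show ?thesis unfolding set_lebesgue_integral_def
    by (simp add: Bochner_Integration.integral_add[OF intg_ind intg_ind])
qed

lemma nd_le: "nd t \<le> 1"
proof -
  have "exp (- t\<^sup>2 / 2) \<le> 1" by simp
  moreover have "1 / sqrt (2*pi) \<le> 1" using pi_gt3 by (simp add: divide_le_eq)
  ultimately show ?thesis unfolding std_normal_density_def
    by (smt (verit) mult_le_one divide_nonneg_nonneg exp_gt_zero real_sqrt_ge_zero pi_gt_zero)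
qed

lemma piece_le:
  assumes "y \<le> z"
  shows "(LINT t:{y..<z}|lborel. nd t) \<le> z - y"
proof -
  have "(LINT t:{y..<z}|lborel. nd t) \<le> (LINT t:{y..<z}|lborel. 1)"
    unfolding set_lebesgue_integral_def
    apply (rule integral_mono)
    using assms by (auto simp: intg_ind nd_le split: split_indicator)
  also have "\<dots> = z - y" using assms by (simp add: set_integral_const)
  finally show ?thesis .
qed

lemma piece_pos:
  assumes "y < z"
  shows "(LINT t:{y..<z}|lborel. nd t) > 0"
proof -
  define M where "M = \<bar>y\<bar> + \<bar>z\<bar>"
  define c where "c = nd M"
  have c: "c > 0" unfolding c_def by (rule normal_density_pos) simp
  have "(LINT t:{y..<z}|lborel. c) \<le> (LINT t:{y..<z}|lborel. nd t)"
    unfolding set_lebesgue_integral_def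
  proof (rule integral_mono)
    show "integrable lborel (\<lambda>x. indicator {y..<z} x *\<^sub>R nd x)" by (simp add: intg_ind)
    show "integrable lborel (\<lambda>x. indicator {y..<z} x *\<^sub>R c)"
      using assms by (auto intro!: integrable_real_mult_indicator)
    fix t show "indicator {y..<z} t *\<^sub>R c \<le> indicator {y..<z} t *\<^sub>R nd t"
    proof (cases "t \<in> {y..<z}")
      case True
      then have "t\<^sup>2 \<le> M\<^sup>2" unfolding M_def apply (simp flip: abs_le_square_iff) by arith
      then have "c \<le> nd t" unfolding c_def std_normal_density_def
        by (intro mult_left_mono) auto
      then show ?thesis using True by simp
    qed simp
  qed
  moreover have "(LINT t:{y..<z}|lborel. c) = c * (z - y)" using assms by (simp add: set_integral_const)
  ultimately show ?thesis using c assms by (smt (verit) mult_pos_pos)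
qed

definition "S y = (LINT t:{y..}|lborel. nd t)"

lemma piece_nonneg: "(LINT t:{y..<z}|lborel. nd t) \<ge> 0"
  unfolding set_lebesgue_integral_def
  by (rule Bochner_Integration.integral_nonneg) (simp split: split_indicator)

lemma S_lip: "dist (S y) (S z) \<le> 1 * dist y z"
proof -
  have *: "\<bar>S y - S z\<bar> \<le> z - y" if "y \<le> z" for y z
    using split_S[OF that] piece_le[OF that] piece_nonneg[of y z] unfolding S_def by simp
  show ?thesis using *[of y z] *[of z y] by (cases "y \<le> z") (auto simp: dist_real_def abs_minus_commute)
qed

lemma S_cont: "continuous_on A S"
  by (rule lipschitz_on_continuous_on[of 1]) (intro lipschitz_onI S_lip, simp)

lemma S_strict: "y < z \<Longrightarrow> S z < S y"
  using split_S[of y z] piece_pos[of y z] unfolding S_def by simp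

lemma S_lim: "(\<lambda>n. S (real n)) \<longlonglongrightarrow> 0"
proof -
  have lim: "AE x in lborel. (\<lambda>n. indicator {real n..} x * nd x) \<longlonglongrightarrow> 0"
  proof (rule AE_I2)
    fix x :: real
    obtain N :: nat where "x < real N" using reals_Archimedean2 by blast
    then have "\<forall>\<^sub>F n in sequentially. indicator {real n..} x * nd x = 0"
      unfolding eventually_sequentially
      by (intro exI[of _ N]) (auto split: split_indicator)
    then show "(\<lambda>n. indicator {real n..} x * nd x) \<longlonglongrightarrow> 0"
      by (rule tendsto_eventually)
  qed
  have bnd: "AE x in lborel. indicator {real n..} x * nd x \<le> nd x" for n
    by (auto split: split_indicator)
  have "(\<lambda>n. LBINT t. indicator {real n..} t * nd t) \<longlonglongrightarrow> 0"
    using integral_dominated_convergence[of "\<lambda>t. 0::real" lborel "\<lambda>n t. indicator {real n..} t *\<^sub>R nd t" nd] lim bnd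
    by simp
  then show ?thesis unfolding S_def set_lebesgue_integral_def by simp
qed

lemma S_0: "S 0 = 1/2"
proof -
  have tot: "S 0 + (LINT t:{..<0}|lborel. nd t) = 1"
  proof -
    have eq: "nd = (\<lambda>t. indicator {0..} t * nd t + indicator {..<0} t * nd t)"
      by (auto simp: fun_eq_iff split: split_indicator)
    have "1 = integral\<^sup>L lborel nd" by simp
    also have "\<dots> = (LBINT t. indicator {0..} t * nd t + indicator {..<0} t * nd t)"
      by (rule arg_cong[OF eq])
    also have "\<dots> = (LBINT t. indicator {0..} t * nd t) + (LBINT t. indicator {..<0} t * nd t)"
      by (rule Bochner_Integration.integral_add) (rule intg_ind, simp)+
    finally show ?thesis unfolding S_def set_lebesgue_integral_def by simp
  qed
  have e1: "{x::real. -x \<in> {..<0}} = {0<..}" by auto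
  have e2: "\<And>x. nd (-x) = nd x" by (simp add: normal_density_def)
  have "(LINT t:{..<0}|lborel. nd t) = (LINT t:{0<..}|lborel. nd t)"
    by (subst set_integral_reflect) (simp only: e1 e2)
  also have "\<dots> = S 0" unfolding S_def set_lebesgue_integral_def
  proof (rule integral_cong_AE)
    show "AE x in lborel. indicator {0<..} x *\<^sub>R nd x = indicator {0..} x *\<^sub>R nd x"
      using AE_lborel_singleton[of "0::real"] by eventually_elim (simp split: split_indicator)
  qed simp_all
  finally show ?thesis using tot by simp
qed

lemma Qfun_S: "Qfun y = S y"
  unfolding Qfun_def S_def std_normal_density_def
  by (simp only: set_integral_mult_right)

lemma Qinv_nonneg:
  assumes "0 < delta" "delta < 1/2"
  shows "Qinv delta \<ge> 0"
proof -
  have "\<forall>\<^sub>F n in sequentially. S (real n) < delta"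
    using order_tendstoD(2)[OF S_lim assms(1)] .
  then obtain n where n: "S (real n) < delta" by (auto simp: eventually_sequentially)
  have "\<exists>x. 0 \<le> x \<and> x \<le> real n \<and> S x = delta"
    by (rule IVT2') (use n assms S_0 S_cont in auto)
  then obtain y where y: "0 \<le> y" "S y = delta" by blast
  have "Qinv delta = y" unfolding Qinv_def Qfun_S
  proof (rule the_equality)
    show "S y = delta" by fact
    fix z assume "S z = delta"
    then show "z = y" using y S_strict[of z y] S_strict[of y z] by (cases z y rule: linorder_cases) auto
  qed
  then show ?thesis using y by simp
qed

lemma gamma_mono:
  assumes "0 < aC" "rhoE2 \<ge> 0" "P > 0" "sigma2 > 0" "GE > 0" "0 \<le> x" "x \<le> y"
  shows "0 \<le> gammaEC aC rhoE2 P sigma2 GE x \<and> gammaEC aC rhoE2 P sigma2 GE x \<le> gammaEC aC rhoE2 P sigma2 GE y"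
proof -
  define K where "K = P * GE"
  have K: "K > 0" using assms unfolding K_def by simp
  have d1: "rhoE2 * K * x + sigma2 > 0" using assms K by (simp add: add_nonneg_pos)
  have d2: "rhoE2 * K * y + sigma2 > 0" using assms K by (simp add: add_nonneg_pos)
  have "aC * K * x * (rhoE2 * K * y + sigma2) \<le> aC * K * y * (rhoE2 * K * x + sigma2)"
  proof -
    have "aC * K * x * (rhoE2 * K * y + sigma2) = aC * K * rhoE2 * K * x * y + aC * K * sigma2 * x"
      by (simp add: algebra_simps)
    also have "\<dots> \<le> aC * K * rhoE2 * K * x * y + aC * K * sigma2 * y"
      using assms K by simp
    also have "\<dots> = aC * K * y * (rhoE2 * K * x + sigma2)" by (simp add: algebra_simps)
    finally show ?thesis .
  qed
  then have "aC * K * x / (rhoE2 * K * x + sigma2) \<le> aC * K * y / (rhoE2 * K * y + sigma2)"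
    using d1 d2 by (simp add: divide_le_eq le_divide_eq mult.commute mult.left_commute)
  moreover have "0 \<le> aC * K * x / (rhoE2 * K * x + sigma2)" using d1 assms K by simp
  ultimately show ?thesis unfolding gammaEC_def K_def by (simp add: mult.assoc)
qed

lemma Vdisp_mono: "0 \<le> g \<Longrightarrow> g \<le> h \<Longrightarrow> Vdisp g \<le> Vdisp h"
proof -
  assume "0 \<le> g" "g \<le> h"
  then have "1 / (1 + h)\<^sup>2 \<le> 1 / (1 + g)\<^sup>2"
    by (intro divide_left_mono power_mono mult_pos_pos) auto
  then show ?thesis unfolding Vdisp_def by (intro mult_left_mono) auto
qed

theorem proposition1:
  fixes m :: nat and Nc delta aC rhoE2 P sigma2 GE :: real
  assumes "m \<ge> 1" and "Nc > 0" and "0 < delta" and "delta < 1/2"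
    and "0 < aC" and "aC < 1" and "rhoE2 \<ge> 0" and "P > 0" and "sigma2 > 0" and "GE > 0"
  shows "mono_on {0..} (beta_tilde m Nc delta aC rhoE2 P sigma2 GE)"
proof (rule mono_onI)
  fix x y :: real assume xy: "x \<in> {0..}" "y \<in> {0..}" "x \<le> y"
  define g where "g = gammaEC aC rhoE2 P sigma2 GE x"
  define h where "h = gammaEC aC rhoE2 P sigma2 GE y"
  define mu where "mu = Qinv delta"
  have mu: "mu \<ge> 0" unfolding mu_def using Qinv_nonneg assms by blast
  have gh: "0 \<le> g" "g \<le> h" using gamma_mono[of aC rhoE2 P sigma2 GE x y] assms xy
    unfolding g_def h_def by auto
  have "sqrt (Vdisp g) \<le> sqrt (Vdisp h)" using Vdisp_mono[OF gh] by simp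
  then have "mu * sqrt (Vdisp g) / sqrt (real m) \<le> mu * sqrt (Vdisp h) / sqrt (real m)"
    using mu by (intro divide_right_mono mult_left_mono) auto
  then have "exp ((mu * sqrt (Vdisp g) / sqrt (real m) + Nc / real m) * ln 2)
      \<le> exp ((mu * sqrt (Vdisp h) / sqrt (real m) + Nc / real m) * ln 2)"
    by simp
  then have "(1 + g) * exp ((mu * sqrt (Vdisp g) / sqrt (real m) + Nc / real m) * ln 2)
      \<le> (1 + h) * exp ((mu * sqrt (Vdisp h) / sqrt (real m) + Nc / real m) * ln 2)"
    using gh by (intro mult_mono) auto
  then show "beta_tilde m Nc delta aC rhoE2 P sigma2 GE x \<le> beta_tilde m Nc delta aC rhoE2 P sigma2 GE y"
    unfolding beta_tilde_def Let_def g_def h_def mu_def by simp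
qed

end
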